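(* Let $G$ be the $n$-cycle graph and let $\sigma$ be a $d$-dimensional signature on $G$. Then there exist $d_1,d_{-1}\in\mathbb{N}$ and $\theta_1,\dots,\theta_k\in(0,\pi)\cup(\pi,2\pi)$ with $d_1+d_{-1}+2k=d$ such that $$\sigma\cong\Big(\bigoplus_{i=1}^{d_1}\iota^1\Big)\oplus\Big(\bigoplus_{i=1}^{d_{-1}}\iota^{-1}\Big)\oplus\sigma^{\theta_1}\oplus\cdots\oplus\sigma^{\theta_k}.$$
   Context: The $n$-cycle graph has vertices $1,\dots,n$ and edges $\{i,i+1\}$ for $i=1,\dots,n$ (indices mod $n$), with positive weights. A $d$-dimensional signature is a map $\sigma$ from oriented edges to $\mathsf{O}(d)$ with $\sigma_{ji}=\sigma_{ij}^{\mathrm T}$. Two $d$-dimensional signatures satisfy $\sigma\cong\tau$ if there is $f:V\to\mathsf{O}(d)$ with $f(i)\sigma_{ij}=\tau_{ij}f(j)$ for every oriented edge $(i,j)$. The direct sum of signatures is the edgewise block-diagonal sum $(\sigma\oplus\sigma')_{ij}=\sigma_{ij}\oplus\sigma'_{ij}$. $\iota^1$ is the $1$-dimensional signature identically $1$; $\iota^{-1}$ is the $1$-dimensional signature with value $-1$ on the oriented edges $(1,2),(2,1)$ and $+1$ elsewhere. For $\theta\in\mathbb{R}$, $\sigma^\theta$ is the $2$-dimensional signature with $\sigma^\theta_{12}=\begin{bmatrix}\cos\theta&-\sin\theta\\ \sin\theta&\cos\theta\end{bmatrix}$ and $\sigma^\theta_{i,i+1}=I_2$ for $i=2,\dots,n$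 (with $\sigma^\theta_{ji}=(\sigma^\theta_{ij})^{\mathrm T}$). $\mathbb{N}$ includes $0$. *)

theory Defs
  imports "Jordan_Normal_Form.Matrix" Complex_Main
begin

definition orth_group :: "nat \<Rightarrow> real mat set" where
  "orth_group d = {Q. Q \<in> carrier_mat d d \<and> transpose_mat Q * Q = 1\<^sub>m d}"

definition cyc_adj :: "nat \<Rightarrow> nat \<Rightarrow> nat \<Rightarrow> bool" where
  "cyc_adj n i j \<longleftrightarrow> i \<in> {1..n} \<and> j \<in> {1..n} \<and>
     (j = i mod n + 1 \<or> i = j mod n + 1)"

text \<open>A d-dimensional signature on the n-cycle: a map from oriented edges to O(d)
  with sigma j i = (sigma i j)^T. Values on non-edges are irrelevant.\<close>
definition is_signature :: "nat \<Rightarrow> nat \<Rightarrow> (nat \<Rightarrow> nat \<Rightarrow> real mat) \<Rightarrow> bool" where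
  "is_signature n d \<sigma> \<longleftrightarrow>
     (\<forall>i j. cyc_adj n i j \<longrightarrow> \<sigma> i j \<in> orth_group d \<and> \<sigma> j i = transpose_mat (\<sigma> i j))"

definition sig_equiv :: "nat \<Rightarrow> nat \<Rightarrow> (nat \<Rightarrow> nat \<Rightarrow> real mat) \<Rightarrow> (nat \<Rightarrow> nat \<Rightarrow> real mat) \<Rightarrow> bool" where
  "sig_equiv n d \<sigma> \<tau> \<longleftrightarrow>
     (\<exists>f. (\<forall>i\<in>{1..n}. f i \<in> orth_group d) \<and>
          (\<forall>i j. cyc_adj n i j \<longrightarrow> f i * \<sigma> i j = \<tau> i j * f j))"

definition diag_sum :: "real mat \<Rightarrow> real mat \<Rightarrow> real mat" where
  "diag_sum A B = four_block_mat A (0\<^sub>m (dim_row A) (dim_col B)) (0\<^sub>m (dim_row B) (dim_col A)) B"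

definition sig_dsum :: "(nat \<Rightarrow> nat \<Rightarrow> real mat) \<Rightarrow> (nat \<Rightarrow> nat \<Rightarrow> real mat) \<Rightarrow> (nat \<Rightarrow> nat \<Rightarrow> real mat)" where
  "sig_dsum \<sigma> \<sigma>' = (\<lambda>i j. diag_sum (\<sigma> i j) (\<sigma>' i j))"

definition sig_empty :: "nat \<Rightarrow> nat \<Rightarrow> real mat" where
  "sig_empty = (\<lambda>i j. 1\<^sub>m 0)"

definition sig_dsum_list :: "(nat \<Rightarrow> nat \<Rightarrow> real mat) list \<Rightarrow> (nat \<Rightarrow> nat \<Rightarrow> real mat)" where
  "sig_dsum_list ss = foldr sig_dsum ss sig_empty"

definition iota_pos :: "nat \<Rightarrow> nat \<Rightarrow> real mat" where
  "iota_pos = (\<lambda>i j. mat 1 1 (\<lambda>_. 1))"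

definition iota_neg :: "nat \<Rightarrow> nat \<Rightarrow> real mat" where
  "iota_neg = (\<lambda>i j. if (i = 1 \<and> j = 2) \<or> (i = 2 \<and> j = 1)
                     then mat 1 1 (\<lambda>_. -1) else mat 1 1 (\<lambda>_. 1))"

definition rot_mat :: "real \<Rightarrow> real mat" where
  "rot_mat \<theta> = mat 2 2 (\<lambda>(r, c).
     if r = 0 \<and> c = 0 then cos \<theta> else if r = 0 \<and> c = 1 then - sin \<theta>
     else if r = 1 \<and> c = 0 then sin \<theta> else cos \<theta>)"

definition sig_theta :: "real \<Rightarrow> nat \<Rightarrow> nat \<Rightarrow> real mat" where
  "sig_theta \<theta> = (\<lambda>i j. if i = 1 \<and> j = 2 then rot_mat \<theta>
                        else if i = 2 \<and> j = 1 then transpose_mat (rot_mat \<theta>)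
                        else 1\<^sub>m 2)"

end

theory Submission
  imports Defs "Jordan_Normal_Form.Spectral_Radius"
begin
lemma orthD: assumes "Q \<in> orth_group d"
  shows "Q \<in> carrier_mat d d" "transpose_mat Q * Q = 1\<^sub>m d" "Q * transpose_mat Q = 1\<^sub>m d"
proof -
  show Q: "Q \<in> carrier_mat d d" and L: "transpose_mat Q * Q = 1\<^sub>m d" using assms unfolding orth_group_def by auto
  show "Q * transpose_mat Q = 1\<^sub>m d"
    by (rule mat_mult_left_right_inverse[OF _ Q L]) (use Q in auto)
qed

lemma orthI: "Q \<in> carrier_mat d d \<Longrightarrow> transpose_mat Q * Q = 1\<^sub>m d \<Longrightarrow> Q \<in> orth_group d"
  unfolding orth_group_def by auto

lemma orth_transpose: assumes "Q \<in> orth_group d" shows "transpose_mat Q \<in> orth_group d"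
  using orthD[OF assms] by (intro orthI) auto

lemma orth_one: "1\<^sub>m d \<in> orth_group d"
  by (intro orthI) auto

lemma orth_mult: assumes P: "P \<in> orth_group d" and Q: "Q \<in> orth_group d"
  shows "P * Q \<in> orth_group d"
proof (rule orthI)
  note p = orthD[OF P] and q = orthD[OF Q]
  show "P * Q \<in> carrier_mat d d" using p q by auto
  have PT: "transpose_mat P \<in> carrier_mat d d" and QT: "transpose_mat Q \<in> carrier_mat d d" using p q by auto
  have "transpose_mat (P * Q) * (P * Q) = (transpose_mat Q * transpose_mat P) * (P * Q)"
    using p q by (simp add: transpose_mult[of P d d Q d])
  also have "\<dots> = transpose_mat Q * (transpose_mat P * (P * Q))"
    by (rule assoc_mult_mat[OF QT PT]) (use p q in auto)
  also have "transpose_mat P * (P * Q) = Q" using assoc_mult_mat[OF PT p(1) q(1), symmetric] p q by simp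
  also have "transpose_mat Q * Q = 1\<^sub>m d" using q by simp
  finally show "transpose_mat (P * Q) * (P * Q) = 1\<^sub>m d" .
qed

lemma diag_sum_carrier[simp]: "A \<in> carrier_mat a a \<Longrightarrow> B \<in> carrier_mat b b \<Longrightarrow> diag_sum A B \<in> carrier_mat (a+b) (a+b)"
  unfolding diag_sum_def by auto

lemma diag_sum_dims[simp]: "dim_row (diag_sum A B) = dim_row A + dim_row B"
   "dim_col (diag_sum A B) = dim_col A + dim_col B"
  unfolding diag_sum_def by auto

lemma diag_sum_eq: assumes "A \<in> carrier_mat a a" "B \<in> carrier_mat b b"
  shows "diag_sum A B = four_block_mat A (0\<^sub>m a b) (0\<^sub>m b a) B"
  using assms unfolding diag_sum_def by auto

lemma diag_sum_mult: assumes "A \<in> carrier_mat a a" "B \<in> carrier_mat b b" "C \<in> carrier_mat a a" "E \<in> carrier_mat b b"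
  shows "diag_sum A B * diag_sum C E = diag_sum (A * C) (B * E)"
  using assms
  apply (simp add: diag_sum_eq mult_four_block_mat[OF assms(1) zero_carrier_mat zero_carrier_mat assms(2) assms(3) zero_carrier_mat zero_carrier_mat assms(4)])
  apply (rule diag_sum_eq[symmetric]) using assms by auto

lemma diag_sum_transpose: assumes "A \<in> carrier_mat a a" "B \<in> carrier_mat b b"
  shows "transpose_mat (diag_sum A B) = diag_sum (transpose_mat A) (transpose_mat B)"
  using assms
  by (simp add: diag_sum_eq transpose_four_block_mat[OF assms(1) zero_carrier_mat zero_carrier_mat assms(2)])

lemma diag_sum_one: "diag_sum (1\<^sub>m a) (1\<^sub>m b) = 1\<^sub>m (a + b)"
  unfolding diag_sum_def by simp

lemma diag_sum_orth: assumes A: "A \<in> orth_group a" and B: "B \<in> orth_group b"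
  shows "diag_sum A B \<in> orth_group (a + b)"
proof (rule orthI)
  note p = orthD[OF A] and q = orthD[OF B]
  show "diag_sum A B \<in> carrier_mat (a + b) (a + b)" using p q by auto
  show "transpose_mat (diag_sum A B) * diag_sum A B = 1\<^sub>m (a + b)"
    using p q by (simp add: diag_sum_transpose[of _ a _ b] diag_sum_mult[of _ a _ b] diag_sum_one)
qed

lemma diag_sum_mult_vec: assumes "A \<in> carrier_mat a a" "B \<in> carrier_mat b b" "x \<in> carrier_vec a" "y \<in> carrier_vec b"
  shows "diag_sum A B *\<^sub>v (x @\<^sub>v y) = (A *\<^sub>v x) @\<^sub>v (B *\<^sub>v y)"
proof -
  have "dim_row A = a" "dim_col A = a" "dim_row B = b" "dim_col B = b" using assms by auto
  then show ?thesis unfolding diag_sum_def using assms by (simp add: mult_mat_vec_split)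
qed

lemma sp_self_nonneg: "0 \<le> (v::real vec) \<bullet> v"
  unfolding scalar_prod_def by (intro sum_nonneg) auto

lemma sp_self_zero: assumes "(v::real vec) \<in> carrier_vec n" "v \<bullet> v = 0" shows "v = 0\<^sub>v n"
proof (rule eq_vecI)
  have "\<forall>i\<in>{0..<dim_vec v}. v $ i * v $ i = 0"
    using assms(2) unfolding scalar_prod_def by (subst sum_nonneg_eq_0_iff[symmetric]) auto
  then show "\<And>i. i < dim_vec (0\<^sub>v n) \<Longrightarrow> v $ i = 0\<^sub>v n $ i" using assms(1) by auto
qed (use assms in auto)

lemma sp_self_pos: assumes "(v::real vec) \<in> carrier_vec n" "v \<noteq> 0\<^sub>v n" shows "0 < v \<bullet> v"
  using sp_self_nonneg[of v] sp_self_zero[OF assms(1)] assms(2) by fastforce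

lemma mat_entry_vec: fixes M :: "real mat" assumes M: "M \<in> carrier_mat n m" and i: "i < n" and j: "j < m"
  shows "M $$ (i,j) = (M *\<^sub>v unit_vec m j) $ i"
proof -
  have "(M *\<^sub>v unit_vec m j) $ i = row M i \<bullet> unit_vec m j" using M i by simp
  also have "\<dots> = row M i $ j" by (rule scalar_prod_right_unit[OF j])
  finally show ?thesis using M i j by simp
qed

lemma mat_eq_vec: fixes A B :: "real mat" assumes A: "A \<in> carrier_mat n m" and B: "B \<in> carrier_mat n m"
  and eq: "\<And>j. j < m \<Longrightarrow> A *\<^sub>v unit_vec m j = B *\<^sub>v unit_vec m j"
  shows "A = B"
proof (rule eq_matI)
  fix i j assume i: "i < dim_row B" and j: "j < dim_col B"
  have "A $$ (i,j) = (A *\<^sub>v unit_vec m j) $ i" using A B i j by (intro mat_entry_vec[OF A]) auto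
  also have "\<dots> = (B *\<^sub>v unit_vec m j) $ i" using eq j B by auto
  also have "\<dots> = B $$ (i,j)" using A B i j by (intro mat_entry_vec[OF B, symmetric]) auto
  finally show "A $$ (i,j) = B $$ (i,j)" .
qed (use A B in auto)

definition hh :: "real vec \<Rightarrow> real mat" where
  "hh w = mat (dim_vec w) (dim_vec w) (\<lambda>(i,j). (if i = j then 1 else 0) - 2 / (w \<bullet> w) * (w $ i * w $ j))"

lemma hh_carrier[simp]: "w \<in> carrier_vec n \<Longrightarrow> hh w \<in> carrier_mat n n"
  unfolding hh_def by auto

lemma hh_sym: "transpose_mat (hh w) = hh w"
  unfolding hh_def by (rule eq_matI) (auto simp: mult.commute)

lemma hh_vec: assumes w: "w \<in> carrier_vec n" and v: "v \<in> carrier_vec n"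
  shows "hh w *\<^sub>v v = v - (2 / (w \<bullet> w) * (w \<bullet> v)) \<cdot>\<^sub>v w"
proof (rule eq_vecI)
  fix i assume "i < dim_vec (v - (2 / (w \<bullet> w) * (w \<bullet> v)) \<cdot>\<^sub>v w)"
  then have i: "i < n" using v w by auto
  let ?c = "2 / (w \<bullet> w)"
  have "(hh w *\<^sub>v v) $ i = (\<Sum>j = 0..<n. ((if i = j then 1 else 0) - ?c * (w $ i * w $ j)) * v $ j)"
    using w v i unfolding hh_def by (auto simp: scalar_prod_def row_def)
  also have "\<dots> = (\<Sum>j = 0..<n. (if i = j then v $ j else 0) - ?c * w $ i * (w $ j * v $ j))"
    by (rule sum.cong) (auto simp: left_diff_distrib)
  also have "\<dots> = (\<Sum>j = 0..<n. (if i = j then v $ j else 0)) - ?c * w $ i * (\<Sum>j = 0..<n. w $ j * v $ j)"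
    by (simp add: sum_subtractf sum_distrib_left)
  also have "\<dots> = v $ i - ?c * w $ i * (w \<bullet> v)"
    using i v by (simp add: scalar_prod_def)
  finally show "(hh w *\<^sub>v v) $ i = (v - (2 / (w \<bullet> w) * (w \<bullet> v)) \<cdot>\<^sub>v w) $ i"
    using i v w by simp
qed (use w v in \<open>auto simp: hh_def\<close>)

lemma hh_orth: assumes w: "w \<in> carrier_vec n" shows "hh w \<in> orth_group n"
proof (rule orthI)
  show H: "hh w \<in> carrier_mat n n" using w by simp
  show "transpose_mat (hh w) * hh w = 1\<^sub>m n"
  proof (rule mat_eq_vec[of _ n n])
    fix j assume j: "j < n"
    let ?e = "unit_vec n j" let ?c = "2 / (w \<bullet> w)"
    have e: "?e \<in> carrier_vec n" by simp
    have v1: "hh w *\<^sub>v ?e = ?e - (?c * (w \<bullet> ?e)) \<cdot>\<^sub>v w" by (rule hh_vec[OF w e])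
    have c1: "hh w *\<^sub>v ?e \<in> carrier_vec n" using H by auto
    have "hh w *\<^sub>v (hh w *\<^sub>v ?e) = (hh w *\<^sub>v ?e) - (?c * (w \<bullet> (hh w *\<^sub>v ?e))) \<cdot>\<^sub>v w"
      by (rule hh_vec[OF w c1])
    also have "w \<bullet> (hh w *\<^sub>v ?e) = w \<bullet> ?e - ?c * (w \<bullet> ?e) * (w \<bullet> w)"
      unfolding v1 using w by (subst scalar_prod_minus_distrib[of _ n]) auto
    also have "hh w *\<^sub>v ?e - (?c * (w \<bullet> ?e - ?c * (w \<bullet> ?e) * (w \<bullet> w))) \<cdot>\<^sub>v w = ?e"
    proof (rule eq_vecI)
      fix i assume "i < dim_vec ?e"
      then have i: "i < n" by simp
      have cc: "?c * (?c * (w \<bullet> w)) = 2 * ?c"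
        by (cases "w \<bullet> w = 0") (auto simp: field_simps)
      show "(hh w *\<^sub>v ?e - (?c * (w \<bullet> ?e - ?c * (w \<bullet> ?e) * (w \<bullet> w))) \<cdot>\<^sub>v w) $ i = ?e $ i"
        unfolding v1 using i w j
        by (simp add: algebra_simps)
    qed (use w in auto)
    finally have "hh w *\<^sub>v (hh w *\<^sub>v ?e) = ?e" .
    then show "transpose_mat (hh w) * hh w *\<^sub>v ?e = 1\<^sub>m n *\<^sub>v ?e"
      unfolding hh_sym using H by (subst assoc_mult_mat_vec[of _ n n _ n]) auto
  qed (use H in auto)
qed

lemma orth_inner: assumes Q: "Q \<in> orth_group d" and x: "x \<in> carrier_vec d" and y: "y \<in> carrier_vec d"
  shows "(Q *\<^sub>v x) \<bullet> (Q *\<^sub>v y) = x \<bullet> y"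
proof -
  note q = orthD[OF Q]
  have "(Q *\<^sub>v x) \<bullet> (Q *\<^sub>v y) = (transpose_mat Q *\<^sub>v (Q *\<^sub>v x)) \<bullet> y"
    by (rule transpose_vec_mult_scalar[OF q(1) y, symmetric]) (use q x in auto)
  also have "transpose_mat Q *\<^sub>v (Q *\<^sub>v x) = x"
    using q x by (subst assoc_mult_mat_vec[symmetric, of _ d d _ d]) auto
  finally show ?thesis .
qed

lemma refl_map: assumes a: "a \<in> carrier_vec n" and b: "b \<in> carrier_vec n"
  and aa: "a \<bullet> a = 1" and bb: "b \<bullet> b = 1"
  shows "hh (a - b) *\<^sub>v a = b"
proof -
  have w: "a - b \<in> carrier_vec n" using a b by auto
  have ba: "b \<bullet> a = a \<bullet> b" using a b comm_scalar_prod by blast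
  have wa: "(a - b) \<bullet> a = 1 - a \<bullet> b" using a b aa ba by (subst minus_scalar_prod_distrib[of _ n]) auto
  have ww: "(a - b) \<bullet> (a - b) = 2 - 2 * (a \<bullet> b)"
    using a b aa bb ba
    by (simp add: minus_scalar_prod_distrib[of _ n] scalar_prod_minus_distrib[of _ n])
  show ?thesis
  proof (cases "a \<bullet> b = 1")
    case True
    then have "(a - b) \<bullet> (a - b) = 0" using ww by simp
    then have "a - b = 0\<^sub>v n" using sp_self_zero[OF w] by simp
    have ab: "a = b"
    proof (rule eq_vecI)
      fix i assume "i < dim_vec b"
      then have "(a - b) $ i = 0" using \<open>a - b = 0\<^sub>v n\<close> b by simp
      then show "a $ i = b $ i" using \<open>i < dim_vec b\<close> a b by simp
    qed (use a b in auto)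
    show ?thesis unfolding ab using b by (subst hh_vec[of _ n]) auto
  next
    case False
    have "hh (a - b) *\<^sub>v a = a - (2 / ((a - b) \<bullet> (a - b)) * ((a - b) \<bullet> a)) \<cdot>\<^sub>v (a - b)"
      by (rule hh_vec[OF w a])
    also have "2 / ((a - b) \<bullet> (a - b)) * ((a - b) \<bullet> a) = 1"
      unfolding ww wa using False by (simp add: field_simps)
    finally show ?thesis using a b by (intro eq_vecI) auto
  qed
qed

lemma refl_fix: assumes a: "a \<in> carrier_vec n" and b: "b \<in> carrier_vec n" and c: "c \<in> carrier_vec n"
  and ca: "c \<bullet> a = 0" and cb: "c \<bullet> b = 0"
  shows "hh (a - b) *\<^sub>v c = c"
proof -
  have w: "a - b \<in> carrier_vec n" using a b by auto
  have "(a - b) \<bullet> c = 0" using a b c ca cb comm_scalar_prod[OF a c] comm_scalar_prod[OF b c]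
    by (subst minus_scalar_prod_distrib[of _ n]) auto
  then show ?thesis using hh_vec[OF w c] c a b by (intro eq_vecI) auto
qed

lemma row_sq_sum: assumes M: "M \<in> orth_group n" and i: "i < n"
  shows "(\<Sum>j = 0..<n. M $$ (i,j) * M $$ (i,j)) = (1::real)"
proof -
  note q = orthD[OF M]
  have "(M * transpose_mat M) $$ (i,i) = 1" by (subst q(3)) (use i in simp)
  moreover have "(M * transpose_mat M) $$ (i,i) = row M i \<bullet> row M i" using q(1) i by simp
  moreover have "row M i \<bullet> row M i = (\<Sum>j = 0..<n. M $$ (i,j) * M $$ (i,j))"
    using q i unfolding scalar_prod_def by simp
  ultimately show ?thesis by simp
qed

lemma col_sq_sum: assumes M: "M \<in> orth_group n" and j: "j < n"
  shows "(\<Sum>i = 0..<n. M $$ (i,j) * M $$ (i,j)) = (1::real)"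
proof -
  note q = orthD[OF M]
  have "(transpose_mat M * M) $$ (j,j) = 1" by (subst q(2)) (use j in simp)
  moreover have "(transpose_mat M * M) $$ (j,j) = col M j \<bullet> col M j" using q(1) j by simp
  moreover have "col M j \<bullet> col M j = (\<Sum>i = 0..<n. M $$ (i,j) * M $$ (i,j))"
    using q j unfolding scalar_prod_def by simp
  ultimately show ?thesis by simp
qed

lemma index_diag_sum_br: assumes "A \<in> carrier_mat a a" "B \<in> carrier_mat b b" "i < b" "j < b"
  shows "diag_sum A B $$ (i + a, j + a) = B $$ (i,j)"
  using assms by (simp add: diag_sum_eq)

lemma blk: fixes M A :: "real mat"
  assumes M: "M \<in> orth_group n" and n: "n = k + m" and A: "A \<in> carrier_mat k k"
  and cl: "\<And>i j. i < n \<Longrightarrow> j < k \<Longrightarrow> M $$ (i,j) = (if i < k then A $$ (i,j) else 0)"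
  shows "\<exists>B \<in> orth_group m. M = diag_sum A B"
proof -
  note q = orthD[OF M]
  let ?f = "\<lambda>i j. M $$ (i,j) * M $$ (i,j)"
  have S1: "(\<Sum>i = 0..<k. \<Sum>j = 0..<n. ?f i j) = real k"
    using row_sq_sum[OF M] n by simp
  have S2: "(\<Sum>j = 0..<k. \<Sum>i = 0..<n. ?f i j) = real k"
    using col_sq_sum[OF M] n by simp
  have S2': "(\<Sum>j = 0..<k. \<Sum>i = 0..<n. ?f i j) = (\<Sum>j = 0..<k. \<Sum>i = 0..<k. ?f i j)"
  proof (rule sum.cong[OF refl])
    fix j assume j: "j \<in> {0..<k}"
    have "(\<Sum>i = 0..<n. ?f i j) = (\<Sum>i = 0..<k. ?f i j) + (\<Sum>i = k..<n. ?f i j)"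
      using n by (simp add: sum.atLeastLessThan_concat)
    also have "(\<Sum>i = k..<n. ?f i j) = 0" using cl j by (intro sum.neutral) auto
    finally show "(\<Sum>i = 0..<n. ?f i j) = (\<Sum>i = 0..<k. ?f i j)" by simp
  qed
  have S1': "(\<Sum>i = 0..<k. \<Sum>j = 0..<n. ?f i j) = (\<Sum>i = 0..<k. \<Sum>j = 0..<k. ?f i j) + (\<Sum>i = 0..<k. \<Sum>j = k..<n. ?f i j)"
  proof -
    have "\<And>i. (\<Sum>j = 0..<n. ?f i j) = (\<Sum>j = 0..<k. ?f i j) + (\<Sum>j = k..<n. ?f i j)"
      using n by (simp add: sum.atLeastLessThan_concat)
    then show ?thesis by (simp add: sum.distrib)
  qed
  have sw: "(\<Sum>i = 0..<k. \<Sum>j = 0..<k. ?f i j) = (\<Sum>j = 0..<k. \<Sum>i = 0..<k. ?f i j)"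
    by (rule sum.swap)
  have Z: "(\<Sum>i = 0..<k. \<Sum>j = k..<n. ?f i j) = 0" using S1 S2 S1' S2' sw by linarith
  have ur: "M $$ (i,j) = 0" if i: "i < k" and j: "k \<le> j" "j < n" for i j
  proof -
    have "\<forall>i\<in>{0..<k}. (\<Sum>j = k..<n. ?f i j) = 0"
      using Z by (subst sum_nonneg_eq_0_iff[symmetric]) (auto intro: sum_nonneg)
    then have "(\<Sum>j = k..<n. ?f i j) = 0" using i by auto
    then have "\<forall>j\<in>{k..<n}. ?f i j = 0" by (subst sum_nonneg_eq_0_iff[symmetric]) auto
    then show ?thesis using j by auto
  qed
  define B where "B = mat m m (\<lambda>(i,j). M $$ (i + k, j + k))"
  have Bc: "B \<in> carrier_mat m m" unfolding B_def by simp
  have MD: "M = diag_sum A B"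
  proof (rule eq_matI)
    fix i j assume i: "i < dim_row (diag_sum A B)" and j: "j < dim_col (diag_sum A B)"
    then have i': "i < n" and j': "j < n" using A Bc n by auto
    show "M $$ (i,j) = diag_sum A B $$ (i,j)"
      unfolding diag_sum_eq[OF A Bc] using A Bc i' j' n cl[OF i'] ur[of i j]
      by (auto simp: B_def)
  qed (use q A Bc n in auto)
  have "transpose_mat M * M = diag_sum (transpose_mat A * A) (transpose_mat B * B)"
    unfolding MD using A Bc
    by (simp add: diag_sum_transpose[OF A Bc] diag_sum_mult[of _ k _ m])
  then have E: "diag_sum (transpose_mat A * A) (transpose_mat B * B) = 1\<^sub>m n" using q by simp
  have "transpose_mat B * B = 1\<^sub>m m"
  proof (rule eq_matI)
    fix i j assume i: "i < dim_row (1\<^sub>m m)" and j: "j < dim_col (1\<^sub>m m)"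
    have "diag_sum (transpose_mat A * A) (transpose_mat B * B) $$ (i + k, j + k) = 1\<^sub>m n $$ (i + k, j + k)"
      by (simp add: E)
    then show "(transpose_mat B * B) $$ (i,j) = 1\<^sub>m m $$ (i,j)"
      using i j A Bc n index_diag_sum_br[of "transpose_mat A * A" k "transpose_mat B * B" m i j]
      by (auto simp del: index_mult_mat)
  qed (use Bc in auto)
  then have "B \<in> orth_group m" using Bc by (intro orthI)
  then show ?thesis using MD by blast
qed

lemma splitG: fixes K P A :: "real mat" and u :: "nat \<Rightarrow> real vec"
  assumes K: "K \<in> orth_group n" and P: "P \<in> orth_group n" and n: "n = k + m"
  and A: "A \<in> carrier_mat k k"
  and u: "\<And>j. j < k \<Longrightarrow> u j \<in> carrier_vec n"
  and Pu: "\<And>j. j < k \<Longrightarrow> P *\<^sub>v u j = unit_vec n j"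
  and img: "\<And>i j. i < n \<Longrightarrow> j < k \<Longrightarrow> (P *\<^sub>v (K *\<^sub>v u j)) $ i = (if i < k then A $$ (i,j) else 0)"
  shows "\<exists>B \<in> orth_group m. P * K * transpose_mat P = diag_sum A B"
proof -
  note p = orthD[OF P] and kk = orthD[OF K]
  have PT: "transpose_mat P \<in> carrier_mat n n" using p by auto
  have M: "P * K * transpose_mat P \<in> orth_group n"
    by (intro orth_mult orth_transpose P K)
  show ?thesis
  proof (rule blk[OF M n A])
    fix i j assume i: "i < n" and j: "j < k"
    have jn: "j < n" using j n by simp
    have "(P * K * transpose_mat P) $$ (i,j) = (P * K * transpose_mat P *\<^sub>v unit_vec n j) $ i"
      by (rule mat_entry_vec[of _ n n]) (use p kk i jn in auto)
    also have "P * K * transpose_mat P *\<^sub>v unit_vec n j = P *\<^sub>v (K *\<^sub>v (transpose_mat P *\<^sub>v unit_vec n j))"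
      using p kk PT by (simp add: assoc_mult_mat_vec[of _ n n _ n])
    also have "transpose_mat P *\<^sub>v unit_vec n j = u j"
    proof -
      have "transpose_mat P *\<^sub>v unit_vec n j = transpose_mat P *\<^sub>v (P *\<^sub>v u j)" using Pu[OF j] by simp
      also have "\<dots> = u j" using assoc_mult_mat_vec[OF PT p(1) u[OF j]] p u[OF j] by simp
      finally show ?thesis .
    qed
    finally show "(P * K * transpose_mat P) $$ (i,j) = (if i < k then A $$ (i,j) else 0)"
      using img[OF i j] by simp
  qed
qed

lemma unit_sp: "i < n \<Longrightarrow> j < n \<Longrightarrow> unit_vec n i \<bullet> unit_vec n j = (if i = j then (1::real) else 0)"
  by simp

lemma split1: fixes K :: "real mat"
  assumes K: "K \<in> orth_group (Suc m)" and u: "u \<in> carrier_vec (Suc m)" and uu: "u \<bullet> u = 1"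
  and Ku: "K *\<^sub>v u = c \<cdot>\<^sub>v u"
  shows "\<exists>P \<in> orth_group (Suc m). \<exists>B \<in> orth_group m. P * K * transpose_mat P = diag_sum (mat 1 1 (\<lambda>_. c)) B"
proof -
  let ?n = "Suc m"
  let ?e = "unit_vec ?n 0"
  define P where "P = hh (u - ?e)"
  have P: "P \<in> orth_group ?n" unfolding P_def by (rule hh_orth) (use u in auto)
  have Pu: "P *\<^sub>v u = ?e" unfolding P_def by (rule refl_map) (use u uu in auto)
  note p = orthD[OF P]
  have "\<exists>B \<in> orth_group m. P * K * transpose_mat P = diag_sum (mat 1 1 (\<lambda>_. c)) B"
  proof (rule splitG[OF K P _ _, of 1 m _ "\<lambda>_. u"])
    fix i j :: nat assume i: "i < ?n" and j: "j < 1"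
    have "P *\<^sub>v (K *\<^sub>v u) = c \<cdot>\<^sub>v ?e" unfolding Ku using p u Pu by (simp add: mult_mat_vec)
    then show "(P *\<^sub>v (K *\<^sub>v u)) $ i = (if i < 1 then mat 1 1 (\<lambda>_. c) $$ (i,j) else 0)"
      using i j by auto
  qed (use u Pu in auto)
  then show ?thesis using P by blast
qed

lemma split2: fixes K :: "real mat"
  assumes K: "K \<in> orth_group (Suc (Suc m))" and u0: "u0 \<in> carrier_vec (Suc (Suc m))"
  and u1: "u1 \<in> carrier_vec (Suc (Suc m))"
  and uu0: "u0 \<bullet> u0 = 1" and uu1: "u1 \<bullet> u1 = 1" and u10: "u1 \<bullet> u0 = 0"
  and Ku0: "K *\<^sub>v u0 = cos t \<cdot>\<^sub>v u0 + sin t \<cdot>\<^sub>v u1"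
  and Ku1: "K *\<^sub>v u1 = (- sin t) \<cdot>\<^sub>v u0 + cos t \<cdot>\<^sub>v u1"
  shows "\<exists>P \<in> orth_group (Suc (Suc m)). \<exists>B \<in> orth_group m. P * K * transpose_mat P = diag_sum (rot_mat t) B"
proof -
  let ?n = "Suc (Suc m)"
  let ?e0 = "unit_vec ?n 0" and ?e1 = "unit_vec ?n 1"
  define P1 where "P1 = hh (u0 - ?e0)"
  have P1: "P1 \<in> orth_group ?n" unfolding P1_def by (rule hh_orth) (use u0 in auto)
  have P1u0: "P1 *\<^sub>v u0 = ?e0" unfolding P1_def by (rule refl_map) (use u0 uu0 in auto)
  note p1 = orthD[OF P1]
  define v where "v = P1 *\<^sub>v u1"
  have v: "v \<in> carrier_vec ?n" unfolding v_def using p1 u1 by auto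
  have vv: "v \<bullet> v = 1" unfolding v_def using orth_inner[OF P1 u1 u1] uu1 by simp
  have ve0: "v \<bullet> ?e0 = 0" unfolding v_def P1u0[symmetric] using orth_inner[OF P1 u1 u0] u10 by simp
  have e0v: "?e0 \<bullet> v = 0" using ve0 comm_scalar_prod[OF v, of ?e0] by simp
  define P2 where "P2 = hh (v - ?e1)"
  have P2: "P2 \<in> orth_group ?n" unfolding P2_def by (rule hh_orth) (use v in auto)
  have P2v: "P2 *\<^sub>v v = ?e1" unfolding P2_def by (rule refl_map) (use v vv in auto)
  have P2e0: "P2 *\<^sub>v ?e0 = ?e0" unfolding P2_def by (rule refl_fix) (use v e0v in auto)
  note p2 = orthD[OF P2]
  define P where "P = P2 * P1"
  have P: "P \<in> orth_group ?n" unfolding P_def by (rule orth_mult[OF P2 P1])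
  note p = orthD[OF P]
  have Pu0: "P *\<^sub>v u0 = ?e0" unfolding P_def using p1 p2 u0 P1u0 P2e0
    by (simp add: assoc_mult_mat_vec[of _ ?n ?n _ ?n])
  have Pu1: "P *\<^sub>v u1 = ?e1" unfolding P_def using p1 p2 u1 P2v v_def
    by (simp add: assoc_mult_mat_vec[of _ ?n ?n _ ?n])
  define u where "u = (\<lambda>j::nat. if j = 0 then u0 else u1)"
  have "\<exists>B \<in> orth_group m. P * K * transpose_mat P = diag_sum (rot_mat t) B"
  proof (rule splitG[OF K P _ _, of 2 m _ u])
    fix i j :: nat assume i: "i < ?n" and j: "j < 2"
    have I0: "P *\<^sub>v (K *\<^sub>v u0) = cos t \<cdot>\<^sub>v ?e0 + sin t \<cdot>\<^sub>v ?e1"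
      unfolding Ku0 using p u0 u1 Pu0 Pu1 by (simp add: mult_mat_vec mult_add_distrib_mat_vec[of _ ?n ?n])
    have I1: "P *\<^sub>v (K *\<^sub>v u1) = (- sin t) \<cdot>\<^sub>v ?e0 + cos t \<cdot>\<^sub>v ?e1"
      unfolding Ku1 using p u0 u1 Pu0 Pu1 by (simp add: mult_mat_vec mult_add_distrib_mat_vec[of _ ?n ?n])
    show "(P *\<^sub>v (K *\<^sub>v u j)) $ i = (if i < 2 then rot_mat t $$ (i,j) else 0)"
    proof (cases "j = 0")
      case True
      then show ?thesis unfolding u_def using I0 i by (auto simp: rot_mat_def)
    next
      case False
      then have "j = 1" using j by simp
      then show ?thesis unfolding u_def using I1 i by (auto simp: rot_mat_def)
    qed
  next
    fix j assume "j < (2::nat)"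
    then show "P *\<^sub>v u j = unit_vec ?n j" unfolding u_def using Pu0 Pu1
      by (cases "j = 0") auto
  qed (use u0 u1 in \<open>auto simp: u_def rot_mat_def\<close>)
  then show ?thesis using P by blast
qed

definition noev :: "nat \<Rightarrow> real mat \<Rightarrow> real \<Rightarrow> bool" where
  "noev d K c \<longleftrightarrow> (\<forall>v \<in> carrier_vec d. K *\<^sub>v v = c \<cdot>\<^sub>v v \<longrightarrow> v = 0\<^sub>v d)"

lemma eig_pm1: assumes K: "K \<in> orth_group d" and v: "v \<in> carrier_vec d" and v0: "v \<noteq> 0\<^sub>v d"
  and Kv: "K *\<^sub>v v = c \<cdot>\<^sub>v v"
  shows "c = 1 \<or> c = -1"
proof -
  have "(K *\<^sub>v v) \<bullet> (K *\<^sub>v v) = v \<bullet> v" by (rule orth_inner[OF K v v])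
  then have "c * c * (v \<bullet> v) = v \<bullet> v" unfolding Kv using v by simp
  moreover have "v \<bullet> v > 0" by (rule sp_self_pos[OF v v0])
  ultimately have "c * c = 1" by simp
  then show ?thesis by (metis mult_cancel_left1 mult_minus1 square_eq_1_iff)
qed

lemma normalize_ev: fixes K :: "real mat" assumes K: "K \<in> carrier_mat d d" and v: "v \<in> carrier_vec d" and v0: "v \<noteq> 0\<^sub>v d"
  and Kv: "K *\<^sub>v v = c \<cdot>\<^sub>v v"
  shows "\<exists>u \<in> carrier_vec d. u \<bullet> u = 1 \<and> K *\<^sub>v u = c \<cdot>\<^sub>v u"
proof -
  define s where "s = sqrt (v \<bullet> v)"
  have vp: "v \<bullet> v > 0" by (rule sp_self_pos[OF v v0])
  have s: "s > 0" "s * s = v \<bullet> v" unfolding s_def using vp by (auto simp: real_sqrt_mult[symmetric])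
  define u where "u = (1 / s) \<cdot>\<^sub>v v"
  have u: "u \<in> carrier_vec d" unfolding u_def using v by simp
  have "u \<bullet> u = (1 / s) * (1 / s) * (v \<bullet> v)" unfolding u_def using v by simp
  also have "\<dots> = 1" using s vp by (simp add: field_simps)
  finally have uu: "u \<bullet> u = 1" .
  have "K *\<^sub>v u = c \<cdot>\<^sub>v u" unfolding u_def using K v Kv
    by (simp add: mult_mat_vec smult_smult_assoc mult.commute)
  then show ?thesis using u uu by blast
qed

lemma transfer_noev: fixes K P A B :: "real mat"
  assumes P: "P \<in> orth_group n" and K: "K \<in> carrier_mat n n" and n: "n = k + m"
  and A: "A \<in> carrier_mat k k" and B: "B \<in> carrier_mat m m"
  and M: "P * K * transpose_mat P = diag_sum A B" and ne: "noev n K c"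
  shows "noev m B c"
  unfolding noev_def
proof (intro ballI impI)
  fix v assume v: "v \<in> carrier_vec m" and Bv: "B *\<^sub>v v = c \<cdot>\<^sub>v v"
  note p = orthD[OF P]
  have PT: "transpose_mat P \<in> carrier_mat n n" using p by auto
  define z where "z = 0\<^sub>v k @\<^sub>v v"
  have z: "z \<in> carrier_vec n" unfolding z_def using v n by auto
  define w where "w = transpose_mat P *\<^sub>v z"
  have w: "w \<in> carrier_vec n" unfolding w_def using PT z by auto
  have Mz: "diag_sum A B *\<^sub>v z = c \<cdot>\<^sub>v z"
  proof -
    have "diag_sum A B *\<^sub>v z = (A *\<^sub>v 0\<^sub>v k) @\<^sub>v (B *\<^sub>v v)"
      unfolding z_def by (rule diag_sum_mult_vec[OF A B _ v]) auto
    also have "\<dots> = c \<cdot>\<^sub>v z" unfolding Bv z_def using A v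
      by (intro eq_vecI) (auto simp: index_append_vec)
    finally show ?thesis .
  qed
  have "diag_sum A B *\<^sub>v z = P *\<^sub>v (K *\<^sub>v w)"
    unfolding M[symmetric] w_def using p K PT z by (simp add: assoc_mult_mat_vec[of _ n n _ n])
  then have PKw: "P *\<^sub>v (K *\<^sub>v w) = c \<cdot>\<^sub>v z" using Mz by simp
  have Kw: "K *\<^sub>v w \<in> carrier_vec n" using K w by auto
  have "K *\<^sub>v w = transpose_mat P *\<^sub>v (P *\<^sub>v (K *\<^sub>v w))"
    using assoc_mult_mat_vec[OF PT p(1) Kw] p Kw by simp
  also have "\<dots> = c \<cdot>\<^sub>v w" unfolding PKw using PT z by (simp add: w_def mult_mat_vec)
  finally have "K *\<^sub>v w = c \<cdot>\<^sub>v w" .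
  then have w0: "w = 0\<^sub>v n" using ne w unfolding noev_def by blast
  have "z = P *\<^sub>v w" unfolding w_def using assoc_mult_mat_vec[OF p(1) PT z] p z by simp
  also have "\<dots> = 0\<^sub>v n" unfolding w0 using p by (intro eq_vecI) (auto simp: scalar_prod_def)
  finally have z0: "z = 0\<^sub>v n" .
  show "v = 0\<^sub>v m"
  proof (rule eq_vecI)
    fix i assume "i < dim_vec (0\<^sub>v m)"
    then have i: "i < m" by simp
    have "z $ (k + i) = 0" using z0 i n by simp
    then show "v $ i = 0\<^sub>v m $ i" unfolding z_def using i v by (simp add: index_append_vec)
  qed (use v in auto)
qed

lemma ceig: fixes K :: "real mat"
  assumes K: "K \<in> carrier_mat d d" and d: "d > 0"
  shows "\<exists>x \<in> carrier_vec d. \<exists>y \<in> carrier_vec d. \<exists>a c. (x \<noteq> 0\<^sub>v d \<or> y \<noteq> 0\<^sub>v d) \<and>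
     K *\<^sub>v x = a \<cdot>\<^sub>v x + c \<cdot>\<^sub>v y \<and> K *\<^sub>v y = (- c) \<cdot>\<^sub>v x + a \<cdot>\<^sub>v y"
proof -
  define Kc where "Kc = map_mat complex_of_real K"
  have Kc: "Kc \<in> carrier_mat d d" unfolding Kc_def using K by simp
  from spectrum_non_empty[OF Kc d] obtain l where "eigenvalue Kc l" unfolding spectrum_def by auto
  then obtain w where ev: "eigenvector Kc w l" unfolding eigenvalue_def by auto
  then have w: "w \<in> carrier_vec d" and w0: "w \<noteq> 0\<^sub>v d" and Kw: "Kc *\<^sub>v w = l \<cdot>\<^sub>v w"
    unfolding eigenvector_def using Kc by auto
  define x where "x = vec d (\<lambda>i. Re (w $ i))"
  define y where "y = vec d (\<lambda>i. Im (w $ i))"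
  have x: "x \<in> carrier_vec d" and y: "y \<in> carrier_vec d" unfolding x_def y_def by auto
  have row: "(\<Sum>j = 0..<d. complex_of_real (K $$ (i,j)) * w $ j) = l * w $ i" if i: "i < d" for i
  proof -
    have "(Kc *\<^sub>v w) $ i = (l \<cdot>\<^sub>v w) $ i" using Kw by simp
    moreover have "(Kc *\<^sub>v w) $ i = (\<Sum>j = 0..<d. complex_of_real (K $$ (i,j)) * w $ j)"
      using i Kc K w unfolding Kc_def by (simp add: scalar_prod_def)
    ultimately show ?thesis using i w by simp
  qed
  have ex: "K *\<^sub>v x = Re l \<cdot>\<^sub>v x + (- Im l) \<cdot>\<^sub>v y"
  proof (rule eq_vecI)
    fix i assume "i < dim_vec (Re l \<cdot>\<^sub>v x + (- Im l) \<cdot>\<^sub>v y)"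
    then have i: "i < d" using x y by simp
    have "(K *\<^sub>v x) $ i = (\<Sum>j = 0..<d. K $$ (i,j) * Re (w $ j))"
      using i K x unfolding x_def by (simp add: scalar_prod_def)
    also have "\<dots> = Re (\<Sum>j = 0..<d. complex_of_real (K $$ (i,j)) * w $ j)" by simp
    also have "\<dots> = Re (l * w $ i)" using row[OF i] by simp
    finally show "(K *\<^sub>v x) $ i = (Re l \<cdot>\<^sub>v x + (- Im l) \<cdot>\<^sub>v y) $ i"
      using i x y unfolding x_def y_def by simp
  qed (use K x y in auto)
  have ey: "K *\<^sub>v y = (- (- Im l)) \<cdot>\<^sub>v x + Re l \<cdot>\<^sub>v y"
  proof (rule eq_vecI)
    fix i assume "i < dim_vec ((- (- Im l)) \<cdot>\<^sub>v x + Re l \<cdot>\<^sub>v y)"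
    then have i: "i < d" using x y by simp
    have "(K *\<^sub>v y) $ i = (\<Sum>j = 0..<d. K $$ (i,j) * Im (w $ j))"
      using i K y unfolding y_def by (simp add: scalar_prod_def)
    also have "\<dots> = Im (\<Sum>j = 0..<d. complex_of_real (K $$ (i,j)) * w $ j)" by simp
    also have "\<dots> = Im (l * w $ i)" using row[OF i] by simp
    finally show "(K *\<^sub>v y) $ i = ((- (- Im l)) \<cdot>\<^sub>v x + Re l \<cdot>\<^sub>v y) $ i"
      using i x y unfolding x_def y_def by (simp add: algebra_simps)
  qed (use K x y in auto)
  have nz: "x \<noteq> 0\<^sub>v d \<or> y \<noteq> 0\<^sub>v d"
  proof (rule ccontr)
    assume "\<not> (x \<noteq> 0\<^sub>v d \<or> y \<noteq> 0\<^sub>v d)"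
    then have "x = 0\<^sub>v d" "y = 0\<^sub>v d" by auto
    have "w = 0\<^sub>v d"
    proof (rule eq_vecI)
      fix i assume "i < dim_vec (0\<^sub>v d)"
      then have i: "i < d" by simp
      have "Re (w $ i) = 0" "Im (w $ i) = 0"
        using \<open>x = 0\<^sub>v d\<close> \<open>y = 0\<^sub>v d\<close> i unfolding x_def y_def
        by (metis index_vec index_zero_vec(1))+
      then show "w $ i = 0\<^sub>v d $ i" using i by (simp add: complex_eq_iff)
    qed (use w in auto)
    then show False using w0 by simp
  qed
  show ?thesis using x y nz ex ey by blast
qed

lemma ip_lin: fixes x y :: "real vec" assumes x: "x \<in> carrier_vec d" and y: "y \<in> carrier_vec d"
  shows "(a \<cdot>\<^sub>v x + b \<cdot>\<^sub>v y) \<bullet> (c \<cdot>\<^sub>v x + e \<cdot>\<^sub>v y) = a*c*(x \<bullet> x) + (a*e + b*c)*(x \<bullet> y) + b*e*(y \<bullet> y)"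
proof -
  have "(a \<cdot>\<^sub>v x + b \<cdot>\<^sub>v y) \<bullet> (c \<cdot>\<^sub>v x + e \<cdot>\<^sub>v y) = (\<Sum>i = 0..<d. (a * x$i + b * y$i) * (c * x$i + e * y$i))"
    using x y unfolding scalar_prod_def by simp
  also have "\<dots> = (\<Sum>i = 0..<d. a*c*(x$i*x$i) + (a*e + b*c)*(x$i*y$i) + b*e*(y$i*y$i))"
    by (rule sum.cong) (auto simp: algebra_simps)
  also have "\<dots> = a*c*(x \<bullet> x) + (a*e + b*c)*(x \<bullet> y) + b*e*(y \<bullet> y)"
    using x y unfolding scalar_prod_def by (simp add: sum.distrib sum_distrib_left)
  finally show ?thesis .
qed

lemma alg_key: fixes a c X Y Z :: real
  assumes XY: "X + Y > 0" and c: "c \<noteq> 0"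
  and E1: "a*a*X + 2*a*c*Z + c*c*Y = X"
  and E2: "c*c*X - 2*a*c*Z + a*a*Y = Y"
  and E3: "-(a*c)*X + (a*a - c*c)*Z + a*c*Y = Z"
  shows "a*a + c*c = 1 \<and> X = Y \<and> Z = 0"
proof -
  have "(a*a + c*c - 1) * (X + Y) = 0" using E1 E2 by (simp add: algebra_simps)
  then have s: "a*a + c*c = 1" using XY by simp
  have "c * (c*(Y - X) + 2*a*Z) = X*(1 - (a*a+c*c))" using E1 by (simp add: algebra_simps)
  then have "c * (c*(Y - X) + 2*a*Z) = 0" using s by simp
  then have "c*(Y - X) + 2*a*Z = 0" using c by simp
  then have i: "c*(X - Y) = 2*a*Z" by (simp add: algebra_simps)
  have "c * (a*(X - Y) + 2*c*Z) = Z * ((a*a+c*c) - 1)" using E3 by (simp add: algebra_simps)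
  then have "c * (a*(X - Y) + 2*c*Z) = 0" using s by simp
  then have "a*(X - Y) + 2*c*Z = 0" using c by simp
  then have ii: "a*(X - Y) = -2*c*Z" by (simp add: algebra_simps)
  have "(a*a + c*c) * (X - Y) = a * (a*(X - Y)) + c * (c*(X - Y))" by (simp add: algebra_simps)
  also have "\<dots> = 0" unfolding i ii by (simp add: algebra_simps)
  finally have "X = Y" using s by simp
  then have "c * Z = 0" using ii by simp
  then have "Z = 0" using c by simp
  then show ?thesis using s \<open>X = Y\<close> by simp
qed

lemma rotext: fixes K :: "real mat"
  assumes K: "K \<in> orth_group d" and d: "d > 0" and n1: "noev d K 1" and n2: "noev d K (-1)"
  shows "\<exists>m t u0 u1. d = Suc (Suc m) \<and> t \<in> {0<..<pi} \<union> {pi<..<2*pi} \<and>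
    u0 \<in> carrier_vec d \<and> u1 \<in> carrier_vec d \<and> u0 \<bullet> u0 = 1 \<and> u1 \<bullet> u1 = 1 \<and> u1 \<bullet> u0 = 0 \<and>
    K *\<^sub>v u0 = cos t \<cdot>\<^sub>v u0 + sin t \<cdot>\<^sub>v u1 \<and> K *\<^sub>v u1 = (- sin t) \<cdot>\<^sub>v u0 + cos t \<cdot>\<^sub>v u1"
proof -
  note kk = orthD[OF K]
  obtain x y a c where x: "x \<in> carrier_vec d" and y: "y \<in> carrier_vec d"
    and nz: "x \<noteq> 0\<^sub>v d \<or> y \<noteq> 0\<^sub>v d"
    and ex: "K *\<^sub>v x = a \<cdot>\<^sub>v x + c \<cdot>\<^sub>v y" and ey: "K *\<^sub>v y = (- c) \<cdot>\<^sub>v x + a \<cdot>\<^sub>v y"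
    using ceig[OF kk(1) d] by blast
  have noe: "False" if v: "v \<in> carrier_vec d" "v \<noteq> 0\<^sub>v d" "K *\<^sub>v v = l \<cdot>\<^sub>v v" for v l
  proof -
    from eig_pm1[OF K v] have "l = 1 \<or> l = -1" .
    then show False using n1 n2 v unfolding noev_def by auto
  qed
  have c0: "c \<noteq> 0"
  proof
    assume c: "c = 0"
    have "K *\<^sub>v x = a \<cdot>\<^sub>v x" unfolding ex c using x y by (intro eq_vecI) auto
    moreover have "K *\<^sub>v y = a \<cdot>\<^sub>v y" unfolding ey c using x y by (intro eq_vecI) auto
    ultimately show False using noe x y nz by blast
  qed
  define X where "X = x \<bullet> x"
  define Y where "Y = y \<bullet> y"
  define Z where "Z = x \<bullet> y"
  have yx: "y \<bullet> x = Z" unfolding Z_def using comm_scalar_prod[OF y x] .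
  have E1: "a*a*X + 2*a*c*Z + c*c*Y = X"
  proof -
    have "(K *\<^sub>v x) \<bullet> (K *\<^sub>v x) = X" unfolding X_def by (rule orth_inner[OF K x x])
    then show ?thesis unfolding ex ip_lin[OF x y] X_def[symmetric] Y_def[symmetric] Z_def[symmetric]
      by (simp add: algebra_simps)
  qed
  have E2: "c*c*X - 2*a*c*Z + a*a*Y = Y"
  proof -
    have "(K *\<^sub>v y) \<bullet> (K *\<^sub>v y) = Y" unfolding Y_def by (rule orth_inner[OF K y y])
    then show ?thesis unfolding ey ip_lin[OF x y] X_def[symmetric] Y_def[symmetric] Z_def[symmetric]
      by (simp add: algebra_simps)
  qed
  have E3: "-(a*c)*X + (a*a - c*c)*Z + a*c*Y = Z"
  proof -
    have "(K *\<^sub>v x) \<bullet> (K *\<^sub>v y) = Z" unfolding Z_def by (rule orth_inner[OF K x y])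
    then show ?thesis unfolding ex ey ip_lin[OF x y] X_def[symmetric] Y_def[symmetric] Z_def[symmetric]
      by (simp add: algebra_simps)
  qed
  have XY: "X + Y > 0"
  proof -
    have "X \<ge> 0" "Y \<ge> 0" unfolding X_def Y_def by (auto intro: sp_self_nonneg)
    moreover have "X > 0 \<or> Y > 0" using nz sp_self_pos[OF x] sp_self_pos[OF y] unfolding X_def Y_def by blast
    ultimately show ?thesis by linarith
  qed
  from alg_key[OF XY c0 E1 E2 E3] have s: "a*a + c*c = 1" and XeY: "X = Y" and Z0: "Z = 0" by auto
  have Xp: "X > 0" using XY XeY by simp
  define r where "r = sqrt X"
  have r: "r > 0" "r * r = X" unfolding r_def using Xp by (auto simp: real_sqrt_mult[symmetric])
  define u0 where "u0 = (1 / r) \<cdot>\<^sub>v x"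
  define u1 where "u1 = (1 / r) \<cdot>\<^sub>v y"
  have u0: "u0 \<in> carrier_vec d" and u1: "u1 \<in> carrier_vec d" unfolding u0_def u1_def using x y by auto
  have uu0: "u0 \<bullet> u0 = 1" unfolding u0_def using x r X_def Xp by (simp add: field_simps)
  have uu1: "u1 \<bullet> u1 = 1" unfolding u1_def using y r Y_def XeY Xp by (simp add: field_simps)
  have u10: "u1 \<bullet> u0 = 0" unfolding u0_def u1_def using x y yx Z0 by simp
  have Ku0: "K *\<^sub>v u0 = a \<cdot>\<^sub>v u0 + c \<cdot>\<^sub>v u1"
    unfolding u0_def u1_def using kk x y ex by (intro eq_vecI) (auto simp: mult_mat_vec algebra_simps)
  have Ku1: "K *\<^sub>v u1 = (- c) \<cdot>\<^sub>v u0 + a \<cdot>\<^sub>v u1"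
    unfolding u0_def u1_def using kk x y ey by (intro eq_vecI) (auto simp: mult_mat_vec algebra_simps)
  have "a\<^sup>2 + c\<^sup>2 = 1" using s by (simp add: power2_eq_square)
  then obtain t where t: "0 \<le> t" "t < 2*pi" "a = cos t" "c = sin t" by (rule sincos_total_2pi)
  have "t \<noteq> 0" using c0 t by auto
  moreover have "t \<noteq> pi" using c0 t by auto
  ultimately have tv: "t \<in> {0<..<pi} \<union> {pi<..<2*pi}" using t by auto
  have d2: "d \<ge> 2"
  proof (rule ccontr)
    assume "\<not> d \<ge> 2"
    then have d1: "d = 1" using d by simp
    have "u0 $ 0 * u0 $ 0 = 1" "u1 $ 0 * u1 $ 0 = 1" "u1 $ 0 * u0 $ 0 = 0"
      using uu0 uu1 u10 u0 u1 d1 unfolding scalar_prod_def by auto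
    then show False by (metis mult_zero_left mult_zero_right zero_neq_one mult_eq_0_iff)
  qed
  then obtain m where m: "d = Suc (Suc m)" by (metis add_2_eq_Suc le_Suc_ex)
  show ?thesis using m tv u0 u1 uu0 uu1 u10 Ku0 Ku1 t by blast
qed

definition Dm :: "nat \<Rightarrow> nat \<Rightarrow> real list \<Rightarrow> real mat" where
  "Dm d1 dm1 ts = foldr diag_sum (replicate d1 (mat 1 1 (\<lambda>_. 1)) @ replicate dm1 (mat 1 1 (\<lambda>_. -1)) @ map rot_mat ts) (1\<^sub>m 0)"

lemma Dm_Suc1: "Dm (Suc d1) dm1 ts = diag_sum (mat 1 1 (\<lambda>_. 1)) (Dm d1 dm1 ts)"
  by (simp add: Dm_def)
lemma Dm_Suc2: "Dm 0 (Suc dm1) ts = diag_sum (mat 1 1 (\<lambda>_. -1)) (Dm 0 dm1 ts)"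
  by (simp add: Dm_def)
lemma Dm_Cons: "Dm 0 0 (t # ts) = diag_sum (rot_mat t) (Dm 0 0 ts)"
  by (simp add: Dm_def)
lemma Dm_Nil: "Dm 0 0 [] = 1\<^sub>m 0"
  by (simp add: Dm_def)

lemma rot_carrier[simp]: "rot_mat t \<in> carrier_mat 2 2"
  unfolding rot_mat_def by simp

lemma Dm_carrier: "Dm d1 dm1 ts \<in> carrier_mat (d1 + dm1 + 2 * length ts) (d1 + dm1 + 2 * length ts)"
proof -
  have c0: "Dm 0 0 ts \<in> carrier_mat (2 * length ts) (2 * length ts)"
  proof (induction ts)
    case Nil then show ?case by (simp add: Dm_Nil)
  next
    case (Cons t ts)
    have "diag_sum (rot_mat t) (Dm 0 0 ts) \<in> carrier_mat (2 + 2 * length ts) (2 + 2 * length ts)"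
      using Cons by (intro diag_sum_carrier) auto
    then show ?case by (simp add: Dm_Cons)
  qed
  have c1: "Dm 0 dm1 ts \<in> carrier_mat (dm1 + 2 * length ts) (dm1 + 2 * length ts)"
  proof (induction dm1)
    case 0 then show ?case using c0 by simp
  next
    case (Suc dm1)
    have "diag_sum (mat 1 1 (\<lambda>_. -1)) (Dm 0 dm1 ts) \<in> carrier_mat (1 + (dm1 + 2 * length ts)) (1 + (dm1 + 2 * length ts))"
      using Suc by (intro diag_sum_carrier) auto
    then show ?case by (simp add: Dm_Suc2)
  qed
  show ?thesis
  proof (induction d1)
    case 0 then show ?case using c1 by simp
  next
    case (Suc d1)
    have "diag_sum (mat 1 1 (\<lambda>_. 1)) (Dm d1 dm1 ts) \<in> carrier_mat (1 + (d1 + dm1 + 2 * length ts)) (1 + (d1 + dm1 + 2 * length ts))"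
      using Suc by (intro diag_sum_carrier) auto
    then show ?case by (simp add: Dm_Suc1)
  qed
qed

lemma conj_step: fixes P K Q A B :: "real mat"
  assumes P: "P \<in> orth_group n" and K: "K \<in> carrier_mat n n" and n: "n = k + m"
  and Q: "Q \<in> orth_group m" and A: "A \<in> carrier_mat k k" and B: "B \<in> carrier_mat m m"
  and M: "P * K * transpose_mat P = diag_sum A B"
  shows "diag_sum (1\<^sub>m k) Q * P \<in> orth_group n \<and>
    (diag_sum (1\<^sub>m k) Q * P) * K * transpose_mat (diag_sum (1\<^sub>m k) Q * P) = diag_sum A (Q * B * transpose_mat Q)"
proof -
  define D where "D = diag_sum (1\<^sub>m k) Q"
  note p = orthD[OF P] and q = orthD[OF Q]
  have Do: "D \<in> orth_group n" unfolding D_def n by (rule diag_sum_orth[OF orth_one Q])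
  note dd = orthD[OF Do]
  have DT: "transpose_mat D = diag_sum (1\<^sub>m k) (transpose_mat Q)"
    unfolding D_def using q by (simp add: diag_sum_transpose[of _ k _ m])
  have PT: "transpose_mat P \<in> carrier_mat n n" and DTc: "transpose_mat D \<in> carrier_mat n n" using p dd by auto
  have "(D * P) * K * transpose_mat (D * P) = (D * P) * K * (transpose_mat P * transpose_mat D)"
    using p dd by (simp add: transpose_mult[of _ n n _ n])
  also have "\<dots> = D * (P * K * transpose_mat P) * transpose_mat D"
    using p dd K PT DTc by (simp add: assoc_mult_mat[of _ n n _ n _ n])
  also have "\<dots> = D * diag_sum A B * transpose_mat D" unfolding M ..
  also have "D * diag_sum A B = diag_sum A (Q * B)"
    unfolding D_def using A B q by (simp add: diag_sum_mult[of _ k _ m])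
  also have "diag_sum A (Q * B) * transpose_mat D = diag_sum A (Q * B * transpose_mat Q)"
    unfolding DT using A B q by (simp add: diag_sum_mult[of _ k _ m])
  finally show ?thesis using orth_mult[OF Do P] unfolding D_def by simp
qed

lemma orth_zero: "K \<in> orth_group 0 \<Longrightarrow> K = 1\<^sub>m 0"
  by (rule eq_matI) (auto dest: orthD)

definition validt :: "real \<Rightarrow> bool" where
  "validt t \<longleftrightarrow> t \<in> {0<..<pi} \<union> {pi<..<2*pi}"

lemma NF_C: "K \<in> orth_group d \<Longrightarrow> noev d K 1 \<Longrightarrow> noev d K (-1) \<Longrightarrow>
  \<exists>P \<in> orth_group d. \<exists>ts. (\<forall>t\<in>set ts. validt t) \<and> 2 * length ts = d \<and> P * K * transpose_mat P = Dm 0 0 ts"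
proof (induction d arbitrary: K rule: less_induct)
  case (less d)
  show ?case
  proof (cases "d = 0")
    case True
    then have "K = 1\<^sub>m 0" using orth_zero less.prems by simp
    then show ?thesis using True by (intro bexI[of _ "1\<^sub>m 0"] exI[of _ "[]"]) (auto simp: Dm_Nil orth_one)
  next
    case False
    then obtain m t u0 u1 where m: "d = Suc (Suc m)" and tv: "t \<in> {0<..<pi} \<union> {pi<..<2*pi}"
      and u: "u0 \<in> carrier_vec d" "u1 \<in> carrier_vec d" "u0 \<bullet> u0 = 1" "u1 \<bullet> u1 = 1" "u1 \<bullet> u0 = 0"
      "K *\<^sub>v u0 = cos t \<cdot>\<^sub>v u0 + sin t \<cdot>\<^sub>v u1" "K *\<^sub>v u1 = (- sin t) \<cdot>\<^sub>v u0 + cos t \<cdot>\<^sub>v u1"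
      using rotext[OF less.prems(1) _ less.prems(2,3)] False by blast
    have Ko: "K \<in> orth_group (Suc (Suc m))" using less.prems m by simp
    obtain P B where P: "P \<in> orth_group (Suc (Suc m))" and B: "B \<in> orth_group m"
      and M: "P * K * transpose_mat P = diag_sum (rot_mat t) B"
      using split2[OF Ko u[unfolded m]] by blast
    have Kc: "K \<in> carrier_mat d d" using orthD(1)[OF less.prems(1)] .
    have Bc: "B \<in> carrier_mat m m" using orthD(1)[OF B] .
    have nB1: "noev m B 1" by (rule transfer_noev[OF P[folded m] Kc _ rot_carrier Bc M less.prems(2)]) (use m in simp)
    have nB2: "noev m B (-1)" by (rule transfer_noev[OF P[folded m] Kc _ rot_carrier Bc M less.prems(3)]) (use m in simp)
    obtain Q ts where Q: "Q \<in> orth_group m" and ts: "\<forall>t\<in>set ts. validt t" "2 * length ts = m"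
      and QB: "Q * B * transpose_mat Q = Dm 0 0 ts"
      using less.IH[of m B] m B nB1 nB2 by auto
    from conj_step[OF P[folded m] Kc _ Q rot_carrier Bc M] m
    have "diag_sum (1\<^sub>m 2) Q * P \<in> orth_group d \<and>
      diag_sum (1\<^sub>m 2) Q * P * K * transpose_mat (diag_sum (1\<^sub>m 2) Q * P) = diag_sum (rot_mat t) (Q * B * transpose_mat Q)"
      by simp
    then show ?thesis using ts tv m unfolding QB
      by (intro bexI[of _ "diag_sum (1\<^sub>m 2) Q * P"] exI[of _ "t # ts"]) (auto simp: Dm_Cons validt_def)
  qed
qed


lemma ev_exists: assumes "\<not> noev d K c" and K: "(K :: real mat) \<in> orth_group d"
  shows "\<exists>m u. d = Suc m \<and> u \<in> carrier_vec d \<and> u \<bullet> u = 1 \<and> K *\<^sub>v u = c \<cdot>\<^sub>v u"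
proof -
  obtain v where v: "v \<in> carrier_vec d" "v \<noteq> 0\<^sub>v d" "K *\<^sub>v v = c \<cdot>\<^sub>v v"
    using assms(1) unfolding noev_def by auto
  have "d \<noteq> 0"
  proof
    assume "d = 0"
    then have "v = 0\<^sub>v d" using v(1) by (intro eq_vecI) auto
    then show False using v(2) by simp
  qed
  then obtain m where "d = Suc m" using not0_implies_Suc by blast
  moreover obtain u where "u \<in> carrier_vec d" "u \<bullet> u = 1" "K *\<^sub>v u = c \<cdot>\<^sub>v u"
    using normalize_ev[OF orthD(1)[OF K] v] by blast
  ultimately show ?thesis by blast
qed

lemma NF_B: "K \<in> orth_group d \<Longrightarrow> noev d K 1 \<Longrightarrow>
  \<exists>P \<in> orth_group d. \<exists>dm1 ts. (\<forall>t\<in>set ts. validt t) \<and> dm1 + 2 * length ts = d \<and> P * K * transpose_mat P = Dm 0 dm1 ts"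
proof (induction d arbitrary: K rule: less_induct)
  case (less d)
  show ?case
  proof (cases "noev d K (-1)")
    case True
    from NF_C[OF less.prems True] show ?thesis by fastforce
  next
    case False
    obtain m u where m: "d = Suc m" and u: "u \<in> carrier_vec d" "u \<bullet> u = 1" "K *\<^sub>v u = (-1) \<cdot>\<^sub>v u"
      using ev_exists[OF False less.prems(1)] by blast
    have Ko: "K \<in> orth_group (Suc m)" using less.prems m by simp
    obtain P B where P: "P \<in> orth_group (Suc m)" and B: "B \<in> orth_group m"
      and M: "P * K * transpose_mat P = diag_sum (mat 1 1 (\<lambda>_. -1)) B"
      using split1[OF Ko u[unfolded m]] by blast
    have Kc: "K \<in> carrier_mat d d" using orthD(1)[OF less.prems(1)] .
    have Bc: "B \<in> carrier_mat m m" using orthD(1)[OF B] .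
    have Ac: "mat 1 1 (\<lambda>_. -1) \<in> carrier_mat 1 1" by simp
    have nB1: "noev m B 1" by (rule transfer_noev[OF P[folded m] Kc _ Ac Bc M less.prems(2)]) (use m in simp)
    obtain Q dm1 ts where Q: "Q \<in> orth_group m" and ts: "\<forall>t\<in>set ts. validt t" "dm1 + 2 * length ts = m"
      and QB: "Q * B * transpose_mat Q = Dm 0 dm1 ts"
      using less.IH[of m B] m B nB1 by auto
    from conj_step[OF P[folded m] Kc _ Q Ac Bc M] m
    have "diag_sum (1\<^sub>m 1) Q * P \<in> orth_group d \<and>
      diag_sum (1\<^sub>m 1) Q * P * K * transpose_mat (diag_sum (1\<^sub>m 1) Q * P) = diag_sum (mat 1 1 (\<lambda>_. -1)) (Q * B * transpose_mat Q)"
      by simp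
    then show ?thesis using ts m unfolding QB
      by (intro bexI[of _ "diag_sum (1\<^sub>m 1) Q * P"] exI[of _ "Suc dm1"] exI[of _ ts]) (auto simp: Dm_Suc2)
  qed
qed

lemma NF_A: "K \<in> orth_group d \<Longrightarrow>
  \<exists>P \<in> orth_group d. \<exists>d1 dm1 ts. (\<forall>t\<in>set ts. validt t) \<and> d1 + dm1 + 2 * length ts = d \<and> P * K * transpose_mat P = Dm d1 dm1 ts"
proof (induction d arbitrary: K rule: less_induct)
  case (less d)
  show ?case
  proof (cases "noev d K 1")
    case True
    from NF_B[OF less.prems True] obtain P dm1 ts where "P \<in> orth_group d" "\<forall>t\<in>set ts. validt t"
      "dm1 + 2 * length ts = d" "P * K * transpose_mat P = Dm 0 dm1 ts" by blast
    then show ?thesis by (intro bexI[of _ P] exI[of _ 0] exI[of _ dm1] exI[of _ ts]) auto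
  next
    case False
    obtain m u where m: "d = Suc m" and u: "u \<in> carrier_vec d" "u \<bullet> u = 1" "K *\<^sub>v u = 1 \<cdot>\<^sub>v u"
      using ev_exists[OF False less.prems(1)] by blast
    have Ko: "K \<in> orth_group (Suc m)" using less.prems m by simp
    obtain P B where P: "P \<in> orth_group (Suc m)" and B: "B \<in> orth_group m"
      and M: "P * K * transpose_mat P = diag_sum (mat 1 1 (\<lambda>_. 1)) B"
      using split1[OF Ko u[unfolded m]] by blast
    have Kc: "K \<in> carrier_mat d d" using orthD(1)[OF less.prems(1)] .
    have Bc: "B \<in> carrier_mat m m" using orthD(1)[OF B] .
    have Ac: "mat 1 1 (\<lambda>_. 1) \<in> carrier_mat 1 1" by simp
    obtain Q d1 dm1 ts where Q: "Q \<in> orth_group m" and ts: "\<forall>t\<in>set ts. validt t" "d1 + dm1 + 2 * length ts = m"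
      and QB: "Q * B * transpose_mat Q = Dm d1 dm1 ts"
      using less.IH[of m B] m B by auto
    from conj_step[OF P[folded m] Kc _ Q Ac Bc M] m
    have "diag_sum (1\<^sub>m 1) Q * P \<in> orth_group d \<and>
      diag_sum (1\<^sub>m 1) Q * P * K * transpose_mat (diag_sum (1\<^sub>m 1) Q * P) = diag_sum (mat 1 1 (\<lambda>_. 1)) (Q * B * transpose_mat Q)"
      by simp
    then show ?thesis using ts m unfolding QB
      by (intro bexI[of _ "diag_sum (1\<^sub>m 1) Q * P"] exI[of _ "Suc d1"] exI[of _ dm1] exI[of _ ts]) (auto simp: Dm_Suc1)
  qed
qed

lemma sdl_eval: "sig_dsum_list ss i j = foldr diag_sum (map (\<lambda>s. s i j) ss) (1\<^sub>m 0)"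
  by (induction ss) (auto simp: sig_dsum_list_def sig_dsum_def sig_empty_def)

lemma mat11_one: "mat 1 1 (\<lambda>_. 1) = (1\<^sub>m 1 :: real mat)"
  by (rule eq_matI) auto

lemma mat11_orth: "c * c = 1 \<Longrightarrow> mat 1 1 (\<lambda>_. c) \<in> orth_group 1"
  by (intro orthI) (auto intro!: eq_matI simp: scalar_prod_def)

lemma rot_orth: "rot_mat t \<in> orth_group 2"
proof (intro orthI)
  show "rot_mat t \<in> carrier_mat 2 2" by simp
  show "transpose_mat (rot_mat t) * rot_mat t = 1\<^sub>m 2"
  proof (rule eq_matI)
    fix i j assume "i < dim_row (1\<^sub>m 2)" "j < dim_col (1\<^sub>m 2)"
    then have "i < 2" "j < 2" by auto
    then have "i = 0 \<or> i = 1" "j = 0 \<or> j = 1" by auto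
    then show "(transpose_mat (rot_mat t) * rot_mat t) $$ (i, j) = 1\<^sub>m 2 $$ (i, j)"
      by (auto simp: rot_mat_def scalar_prod_def numeral_2_eq_2 algebra_simps)
  qed (auto simp: rot_mat_def)
qed

lemma Dm_orth: "Dm d1 dm1 ts \<in> orth_group (d1 + dm1 + 2 * length ts)"
proof -
  have c0: "Dm 0 0 ts \<in> orth_group (2 * length ts)"
  proof (induction ts)
    case Nil then show ?case by (simp add: Dm_Nil orth_one)
  next
    case (Cons t ts)
    have "diag_sum (rot_mat t) (Dm 0 0 ts) \<in> orth_group (2 + 2 * length ts)"
      using Cons by (intro diag_sum_orth rot_orth)
    then show ?case by (simp add: Dm_Cons)
  qed
  have c1: "Dm 0 dm1 ts \<in> orth_group (dm1 + 2 * length ts)"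
  proof (induction dm1)
    case 0 then show ?case using c0 by simp
  next
    case (Suc dm1)
    have "diag_sum (mat 1 1 (\<lambda>_. -1)) (Dm 0 dm1 ts) \<in> orth_group (1 + (dm1 + 2 * length ts))"
      using Suc by (intro diag_sum_orth mat11_orth) auto
    then show ?case by (simp add: Dm_Suc2)
  qed
  show ?thesis
  proof (induction d1)
    case 0 then show ?case using c1 by simp
  next
    case (Suc d1)
    have "diag_sum (mat 1 1 (\<lambda>_. 1)) (Dm d1 dm1 ts) \<in> orth_group (1 + (d1 + dm1 + 2 * length ts))"
      using Suc by (intro diag_sum_orth mat11_orth) auto
    then show ?case by (simp add: Dm_Suc1)
  qed
qed

lemma fold_transpose: assumes "\<forall>B \<in> set Bs. \<exists>k. B \<in> carrier_mat k k"
  shows "(\<exists>N. foldr diag_sum Bs (1\<^sub>m 0) \<in> carrier_mat N N) \<and>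
    foldr diag_sum (map transpose_mat Bs) (1\<^sub>m 0) = transpose_mat (foldr diag_sum Bs (1\<^sub>m 0))"
  using assms
proof (induction Bs)
  case Nil then show ?case by (intro conjI exI[of _ 0]) auto
next
  case (Cons B Bs)
  then obtain k N where B: "B \<in> carrier_mat k k" and F: "foldr diag_sum Bs (1\<^sub>m 0) \<in> carrier_mat N N"
    and E: "foldr diag_sum (map transpose_mat Bs) (1\<^sub>m 0) = transpose_mat (foldr diag_sum Bs (1\<^sub>m 0))" by auto
  show ?case using B F E diag_sum_transpose[OF B F] diag_sum_carrier[OF B F] by (intro conjI exI[of _ "k+N"]) auto
qed

lemma fold_rep_one: "foldr diag_sum (replicate k (1\<^sub>m a)) (1\<^sub>m N) = (1\<^sub>m (k * a + N) :: real mat)"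
  by (induction k) (auto simp: diag_sum_one add.assoc)

lemma tau12: "sig_dsum_list (replicate d1 iota_pos @ replicate dm1 iota_neg @ map sig_theta ts) 1 2 = Dm d1 dm1 ts"
  unfolding sdl_eval Dm_def by (simp add: iota_pos_def iota_neg_def sig_theta_def o_def)

lemma tau21: "sig_dsum_list (replicate d1 iota_pos @ replicate dm1 iota_neg @ map sig_theta ts) 2 1 = transpose_mat (Dm d1 dm1 ts)"
proof -
  let ?Bs = "replicate d1 (mat 1 1 (\<lambda>_. 1)) @ replicate dm1 (mat 1 1 (\<lambda>_. -1)) @ map rot_mat ts"
  have tr: "transpose_mat (mat (Suc 0) (Suc 0) (\<lambda>_. c)) = (mat (Suc 0) (Suc 0) (\<lambda>_. c) :: real mat)" for c
    by (rule eq_matI) auto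
  have "map (\<lambda>s. s 2 1) (replicate d1 iota_pos @ replicate dm1 iota_neg @ map sig_theta ts) = map transpose_mat ?Bs"
    by (simp add: iota_pos_def iota_neg_def sig_theta_def o_def tr)
  moreover have "\<forall>B \<in> set ?Bs. B \<in> carrier_mat 1 1 \<or> B \<in> carrier_mat 2 2" by auto
  then have "\<forall>B \<in> set ?Bs. \<exists>k. B \<in> carrier_mat k k" by blast
  ultimately show ?thesis unfolding sdl_eval Dm_def using fold_transpose by metis
qed

lemma tau_other: assumes "\<not> ((i = 1 \<and> j = 2) \<or> (i = 2 \<and> j = 1))"
  shows "sig_dsum_list (replicate d1 iota_pos @ replicate dm1 iota_neg @ map sig_theta ts) i j = 1\<^sub>m (d1 + dm1 + 2 * length ts)"
proof -
  have th: "(\<lambda>s. s i j) \<circ> sig_theta = (\<lambda>_. 1\<^sub>m 2)" using assms by (auto simp: sig_theta_def fun_eq_iff)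
  have "map (\<lambda>s. s i j) (replicate d1 iota_pos @ replicate dm1 iota_neg @ map sig_theta ts) =
     replicate d1 (1\<^sub>m 1) @ replicate dm1 (1\<^sub>m 1) @ replicate (length ts) (1\<^sub>m 2)"
    using assms by (auto simp: iota_pos_def iota_neg_def th mat11_one map_replicate_const)
  then have "foldr diag_sum (map (\<lambda>s. s i j) (replicate d1 iota_pos @ replicate dm1 iota_neg @ map sig_theta ts)) (1\<^sub>m 0)
     = (1\<^sub>m (d1 * 1 + (dm1 * 1 + (length ts * 2 + 0))) :: real mat)"
    by (simp only: foldr_append fold_rep_one)
  then show ?thesis unfolding sdl_eval by (simp add: algebra_simps)
qed

lemma rev_eq: fixes X Y S T :: "real mat"
  assumes X: "X \<in> carrier_mat d d" and Y: "Y \<in> carrier_mat d d" and S: "S \<in> orth_group d" and T: "T \<in> orth_group d"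
  and E: "X * S = T * Y"
  shows "Y * transpose_mat S = transpose_mat T * X"
proof -
  note s = orthD[OF S] and t = orthD[OF T]
  have ST: "transpose_mat S \<in> carrier_mat d d" and TT: "transpose_mat T \<in> carrier_mat d d" using s t by auto
  have "transpose_mat T * X = transpose_mat T * (X * (S * transpose_mat S))" using s X by simp
  also have "\<dots> = transpose_mat T * (X * S) * transpose_mat S"
    using X s t ST TT by (simp add: assoc_mult_mat[of _ d d _ d _ d])
  also have "\<dots> = (transpose_mat T * T) * Y * transpose_mat S" unfolding E
    using Y s(1) t(1) ST TT by (simp add: assoc_mult_mat[of _ d d _ d _ d])
  also have "\<dots> = Y * transpose_mat S" unfolding t(2) using Y ST by simp
  finally show ?thesis by simp
qed

primrec hprod :: "nat \<Rightarrow> nat \<Rightarrow> (nat \<Rightarrow> nat \<Rightarrow> real mat) \<Rightarrow> nat \<Rightarrow> real mat" where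
  "hprod n d \<sigma> 0 = 1\<^sub>m d"
| "hprod n d \<sigma> (Suc k) = hprod n d \<sigma> k * \<sigma> (k + 2) ((k + 2) mod n + 1)"

lemma cyc_fwd: assumes "n \<ge> 3" "i \<in> {1..n}" shows "cyc_adj n i (i mod n + 1)"
proof -
  have "i mod n < n" using assms(1) by simp
  then show ?thesis unfolding cyc_adj_def using assms by (auto simp: Suc_le_eq)
qed

lemma cyc_sym: "cyc_adj n i j \<Longrightarrow> cyc_adj n j i"
  unfolding cyc_adj_def by auto

lemma hprod_orth: assumes n: "n \<ge> 3" and sig: "is_signature n d \<sigma>"
  shows "k \<le> n - 1 \<Longrightarrow> hprod n d \<sigma> k \<in> orth_group d"
proof (induction k)
  case 0 then show ?case by (simp add: orth_one)
next
  case (Suc k)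
  have "cyc_adj n (k + 2) ((k + 2) mod n + 1)" using Suc.prems n by (intro cyc_fwd) auto
  then have "\<sigma> (k + 2) ((k + 2) mod n + 1) \<in> orth_group d" using sig unfolding is_signature_def by blast
  then show ?case using Suc by (simp add: orth_mult)
qed

lemma tau_cases: assumes "d1 + dm1 + 2 * length ts = d"
  shows "sig_dsum_list (replicate d1 iota_pos @ replicate dm1 iota_neg @ map sig_theta ts) i j =
    (if i = 1 \<and> j = 2 then Dm d1 dm1 ts else if i = 2 \<and> j = 1 then transpose_mat (Dm d1 dm1 ts) else 1\<^sub>m d)"
  using tau12 tau21 tau_other[of i j d1 dm1 ts] assms by auto

theorem proposition2p11:
  fixes n d :: nat and \<sigma> :: "nat \<Rightarrow> nat \<Rightarrow> real mat"
  assumes "n \<ge> 3"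
    and "is_signature n d \<sigma>"
  shows "\<exists>d1 dm1 :: nat. \<exists>\<theta>s :: real list.
           (\<forall>\<theta>\<in>set \<theta>s. \<theta> \<in> {0<..<pi} \<union> {pi<..<2*pi}) \<and>
           d1 + dm1 + 2 * length \<theta>s = d \<and>
           sig_equiv n d \<sigma>
             (sig_dsum_list (replicate d1 iota_pos @ replicate dm1 iota_neg
                             @ map sig_theta \<theta>s))"
proof -
  note n = assms(1) and sig = assms(2)
  have sigo: "\<sigma> i j \<in> orth_group d" and sigt: "\<sigma> j i = transpose_mat (\<sigma> i j)" if "cyc_adj n i j" for i j
    using sig that unfolding is_signature_def by auto
  let ?h = "hprod n d \<sigma>"
  have ho: "k \<le> n - 1 \<Longrightarrow> ?h k \<in> orth_group d" for k by (rule hprod_orth[OF n sig])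
  have e12: "cyc_adj n 1 2" using n unfolding cyc_adj_def by auto
  define K where "K = ?h (n - 1) * \<sigma> 1 2"
  have K: "K \<in> orth_group d" unfolding K_def by (intro orth_mult ho sigo e12) auto
  obtain P d1 dm1 ts where P: "P \<in> orth_group d" and ts: "\<forall>t\<in>set ts. validt t"
    and dd: "d1 + dm1 + 2 * length ts = d" and PK: "P * K * transpose_mat P = Dm d1 dm1 ts"
    using NF_A[OF K] by blast
  define D where "D = Dm d1 dm1 ts"
  have Do: "D \<in> orth_group d" unfolding D_def using Dm_orth[of d1 dm1 ts] dd by simp
  define \<tau> where "\<tau> = sig_dsum_list (replicate d1 iota_pos @ replicate dm1 iota_neg @ map sig_theta ts)"
  have tau: "\<tau> i j = (if i = 1 \<and> j = 2 then D else if i = 2 \<and> j = 1 then transpose_mat D else 1\<^sub>m d)" for i j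
    unfolding \<tau>_def D_def by (rule tau_cases[OF dd])
  have tauo: "\<tau> i j \<in> orth_group d" for i j
    unfolding tau using Do by (auto intro: orth_transpose orth_one)
  have taus: "\<tau> i j = transpose_mat (\<tau> j i)" for i j
    unfolding tau using orthD(1)[OF Do] by auto
  define f where "f i = (if i = 1 then P * ?h (n - 1) else P * ?h (i - 2))" for i
  have fo: "f i \<in> orth_group d" if "i \<in> {1..n}" for i
    unfolding f_def using that P ho by (auto intro!: orth_mult)
  note p = orthD[OF P] and kk = orthD[OF K] and dO = orthD[OF Do]
  have fwd: "f i * \<sigma> i j = \<tau> i j * f j" if i: "i \<in> {1..n}" and j: "j = i mod n + 1" for i j
  proof (cases "i = 1")
    case True
    then have j2: "j = 2" using j n by auto
    have hc: "?h (n - 1) \<in> carrier_mat d d" using orthD(1)[OF ho[of "n - 1"]] by simp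
    have sc: "\<sigma> 1 2 \<in> carrier_mat d d" using orthD(1)[OF sigo[OF e12]] .
    have "f i * \<sigma> i j = P * K" unfolding True j2 f_def K_def using p hc sc
      by (simp add: assoc_mult_mat[of _ d d _ d _ d])
    also have "\<dots> = P * K * (transpose_mat P * P)" using p kk by simp
    also have "\<dots> = D * P" unfolding D_def PK[symmetric] using p kk
      by (simp add: assoc_mult_mat[of _ d d _ d _ d])
    also have "\<dots> = \<tau> i j * f j" unfolding True j2 tau f_def using p by simp
    finally show ?thesis .
  next
    case False
    then have i2: "i \<ge> 2" "i \<le> n" using i by auto
    have nt: "\<not> (i = 1 \<and> j = 2) \<and> \<not> (i = 2 \<and> j = 1)" using False j n i2 by auto
    have fj: "f j = P * ?h (i - 1)"
    proof (cases "i = n")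
      case True then show ?thesis using j f_def by simp
    next
      case False
      then have "j = i + 1" using j i2 by simp
      then show ?thesis unfolding f_def using i2 by simp
    qed
    have hs: "?h (i - 1) = ?h (i - 2) * \<sigma> i j"
    proof -
      have "i - 1 = Suc (i - 2)" "i - 2 + 2 = i" using i2 by auto
      then show ?thesis using j by simp
    qed
    have e: "cyc_adj n i j" using cyc_fwd[OF n i] j by simp
    have hc: "?h (i - 2) \<in> carrier_mat d d" using orthD(1)[OF ho[of "i - 2"]] i2 by simp
    have sc: "\<sigma> i j \<in> carrier_mat d d" using orthD(1)[OF sigo[OF e]] .
    have "f i * \<sigma> i j = P * ?h (i - 2) * \<sigma> i j" unfolding f_def using False by simp
    also have "\<dots> = P * ?h (i - 1)" unfolding hs using p hc sc by (simp add: assoc_mult_mat[of _ d d _ d _ d])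
    also have "\<dots> = \<tau> i j * f j"
    proof -
      have "\<tau> i j = 1\<^sub>m d" unfolding tau using nt by auto
      then show ?thesis unfolding fj using p orthD(1)[OF ho[of "i - 1"]] i2 by simp
    qed
    finally show ?thesis .
  qed
  have "sig_equiv n d \<sigma> \<tau>"
    unfolding sig_equiv_def
  proof (intro exI[of _ f] conjI ballI allI impI)
    fix i assume "i \<in> {1..n}" then show "f i \<in> orth_group d" by (rule fo)
  next
    fix i j assume e: "cyc_adj n i j"
    show "f i * \<sigma> i j = \<tau> i j * f j"
    proof (cases "j = i mod n + 1")
      case True
      then show ?thesis using fwd e unfolding cyc_adj_def by auto
    next
      case False
      then have ij: "i = j mod n + 1" "j \<in> {1..n}" "i \<in> {1..n}" using e unfolding cyc_adj_def by auto
      have e': "cyc_adj n j i" using cyc_sym[OF e] .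
      have E: "f j * \<sigma> j i = \<tau> j i * f i" by (rule fwd[OF ij(2,1)])
      have "f i * transpose_mat (\<sigma> j i) = transpose_mat (\<tau> j i) * f j"
        by (rule rev_eq[OF orthD(1)[OF fo[OF ij(2)]] orthD(1)[OF fo[OF ij(3)]] sigo[OF e'] tauo E])
      then show ?thesis using sigt[OF e'] taus[of i j] by simp
    qed
  qed
  then show ?thesis using ts dd unfolding \<tau>_def validt_def by blast
qed

end
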